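(* Let $Z\subseteq\Sigma^{\mathbb Z}$ be a sofic shift, $f:\mathbb R^n\times Z\to\mathbb R^n$, $(C_1,\dots,C_K)$ a graph-induced covering of $Z$ with presentation $\mathcal G=(S,E)$, $S=\{s_1,\dots,s_K\}$, and let $W:\mathbb R^n\times\{1,\dots,K\}\to\mathbb R$ be a $\mathcal G$-based Lyapunov function for the system $x(k+1)=f(x(k),\sigma^k(\bar z))$. Then the functions $\mathcal V_{\min},\mathcal V_{\max}:\mathbb R^n\times Z\to\mathbb R$, $$\mathcal V_{\min}(x,\bar z)=\min_{j:\ \bar z\in C_j}W(x,j),\qquad \mathcal V_{\max}(x,\bar z)=\max_{j:\ \bar z\in C_j}W(x,j),$$ are both sequence-dependent Lyapunov functions for this system.
   Context: $\Sigma$ nonempty countable alphabet; $\Sigma^{\mathbb Z}$ bi-infinite sequences $\bar z=(z_k)_{k\in\mathbb Z}$; $\sigma(\bar z)_k=z_{k+1}$. A labeled graph is $\mathcal G=(S,E)$, $S$ finite, $E\subseteq S\times S\times\Sigma$; standing assumption: every node has at least one incoming and one outgoing edge. A bi-infinite walk labeled by $\bar z$ is $(e_k)_{k\in\mathbb Z}$, $e_k=(s_k,s_{k+1},z_k)\in E$, starting at $s_0$. $\mathcal Z(\mathcal G)$ / $\mathcal Z(\mathcal G,s)$: labels of all bi-infinite walks / those starting at $s$. Sofic shift: a set $\mathcal Z(\mathcal G)$. Graph-induced covering of $Z$ with presentation $\mathcal G$: a family $(C_1,\dots,C_K)$ with $\mathcal G$ having nodes $s_1,\dots,s_K$, $\mathcal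 Z(\mathcal G)=Z$, $C_j=\mathcal Z(\mathcal G,s_j)$. $\mathcal K_\infty$: continuous strictly increasing unbounded $\alpha:\mathbb R_{\ge0}\to\mathbb R_{\ge0}$ with $\alpha(0)=0$. A $\mathcal G$-based Lyapunov function is $W:\mathbb R^n\times\{1,\dots,K\}\to\mathbb R$ such that there exist $\alpha_1,\alpha_2\in\mathcal K_\infty$, $\gamma\in[0,1)$ with $\alpha_1(|x|)\le W(x,j)\le\alpha_2(|x|)$ for all $x,j$, and $W(f(x,\bar z),l)\le\gamma W(x,j)$ for all $x\in\mathbb R^n$, all edges $(s_j,s_l,i)\in E$ and all $\bar z\in C_j$ with $z_0=i$ and $\sigma(\bar z)\in C_l$. A sequence-dependent Lyapunov function is $\mathcal V:\mathbb R^n\times Z\to\mathbb R$ such that there exist $\alpha_1,\alpha_2\in\mathcal K_\infty$, $\gamma\in[0,1)$ with $\alpha_1(|x|)\le\mathcal V(x,\bar z)\le\alpha_2(|x|)$ and $\mathcal V(f(x,\bar z),\sigma(\bar z))\le\gamma\mathcal V(x,\bar z)$ for all $x\in\mathbb R^n,\bar z\in Z$. *)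

theory Defs
  imports "HOL-Analysis.Analysis"
begin

definition shift :: "(int \<Rightarrow> 'a) \<Rightarrow> (int \<Rightarrow> 'a)" where
  "shift z = (\<lambda>k. z (k + 1))"

definition labeled_graph :: "'v set \<Rightarrow> ('v \<times> 'v \<times> 'a) set \<Rightarrow> bool" where
  "labeled_graph S E \<longleftrightarrow> finite S \<and> E \<subseteq> S \<times> S \<times> UNIV \<and>
     (\<forall>v\<in>S. (\<exists>u i. (u, v, i) \<in> E) \<and> (\<exists>w i. (v, w, i) \<in> E))"

definition walk_labels :: "('v \<times> 'v \<times> 'a) set \<Rightarrow> (int \<Rightarrow> 'a) set" where
  "walk_labels E = {z. \<exists>sq :: int \<Rightarrow> 'v. \<forall>k. (sq k, sq (k + 1), z k) \<in> E}"

definition walk_labels_from :: "('v \<times> 'v \<times> 'a) set \<Rightarrow> 'v \<Rightarrow> (int \<Rightarrow> 'a) set" where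
  "walk_labels_from E v =
     {z. \<exists>sq :: int \<Rightarrow> 'v. sq 0 = v \<and> (\<forall>k. (sq k, sq (k + 1), z k) \<in> E)}"

definition sofic_shift :: "(int \<Rightarrow> 'a) set \<Rightarrow> bool" where
  "sofic_shift Z \<longleftrightarrow> (\<exists>(S :: nat set) E. labeled_graph S E \<and> Z = walk_labels E)"

definition graph_induced_covering ::
  "(int \<Rightarrow> 'a) set \<Rightarrow> (nat \<Rightarrow> (int \<Rightarrow> 'a) set) \<Rightarrow> nat \<Rightarrow> 'v set \<Rightarrow>
   ('v \<times> 'v \<times> 'a) set \<Rightarrow> (nat \<Rightarrow> 'v) \<Rightarrow> bool" where
  "graph_induced_covering Z C K S E s \<longleftrightarrow>
     labeled_graph S E \<and> bij_betw s {1..K} S \<and> walk_labels E = Z \<and>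
     (\<forall>j\<in>{1..K}. C j = walk_labels_from E (s j))"

definition class_K_inf :: "(real \<Rightarrow> real) \<Rightarrow> bool" where
  "class_K_inf \<alpha> \<longleftrightarrow> continuous_on {0..} \<alpha> \<and> strict_mono_on {0..} \<alpha> \<and> \<alpha> 0 = 0 \<and>
     (\<forall>r\<ge>0. \<alpha> r \<ge> 0) \<and> (\<forall>M. \<exists>r\<ge>0. \<alpha> r > M)"

definition G_lyapunov ::
  "('x::real_normed_vector \<Rightarrow> (int \<Rightarrow> 'a) \<Rightarrow> 'x) \<Rightarrow> (nat \<Rightarrow> (int \<Rightarrow> 'a) set) \<Rightarrow> nat \<Rightarrow>
   ('v \<times> 'v \<times> 'a) set \<Rightarrow> (nat \<Rightarrow> 'v) \<Rightarrow> ('x \<Rightarrow> nat \<Rightarrow> real) \<Rightarrow> bool" where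
  "G_lyapunov f C K E s W \<longleftrightarrow>
     (\<exists>\<alpha>1 \<alpha>2 \<gamma>. class_K_inf \<alpha>1 \<and> class_K_inf \<alpha>2 \<and> 0 \<le> \<gamma> \<and> \<gamma> < 1 \<and>
       (\<forall>x. \<forall>j\<in>{1..K}. \<alpha>1 (norm x) \<le> W x j \<and> W x j \<le> \<alpha>2 (norm x)) \<and>
       (\<forall>x. \<forall>j\<in>{1..K}. \<forall>l\<in>{1..K}. \<forall>i. (s j, s l, i) \<in> E \<longrightarrow>
          (\<forall>z\<in>C j. z 0 = i \<longrightarrow> shift z \<in> C l \<longrightarrow> W (f x z) l \<le> \<gamma> * W x j)))"

definition seq_lyapunov ::
  "('x::real_normed_vector \<Rightarrow> (int \<Rightarrow> 'a) \<Rightarrow> 'x) \<Rightarrow> (int \<Rightarrow> 'a) set \<Rightarrow>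
   ('x \<Rightarrow> (int \<Rightarrow> 'a) \<Rightarrow> real) \<Rightarrow> bool" where
  "seq_lyapunov f Z V \<longleftrightarrow>
     (\<exists>\<alpha>1 \<alpha>2 \<gamma>. class_K_inf \<alpha>1 \<and> class_K_inf \<alpha>2 \<and> 0 \<le> \<gamma> \<and> \<gamma> < 1 \<and>
       (\<forall>x. \<forall>z\<in>Z. \<alpha>1 (norm x) \<le> V x z \<and> V x z \<le> \<alpha>2 (norm x)) \<and>
       (\<forall>x. \<forall>z\<in>Z. V (f x z) (shift z) \<le> \<gamma> * V x z))"

end

theory Submission
  imports Defs
begin

lemma setrw: "{W x j | j. j \<in> {1..K::nat} \<and> z \<in> C j} = (\<lambda>j. W x j) ` {j\<in>{1..K}. z \<in> C j}"
  by auto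

theorem mainTheorem5:
  fixes Z :: "(int \<Rightarrow> 'a::countable) set"
    and f :: "real^'n \<Rightarrow> (int \<Rightarrow> 'a) \<Rightarrow> real^'n"
    and C :: "nat \<Rightarrow> (int \<Rightarrow> 'a) set"
    and K :: nat
    and S :: "'v set"
    and E :: "('v \<times> 'v \<times> 'a) set"
    and s :: "nat \<Rightarrow> 'v"
    and W :: "real^'n \<Rightarrow> nat \<Rightarrow> real"
  assumes "sofic_shift Z"
    and "graph_induced_covering Z C K S E s"
    and "G_lyapunov f C K E s W"
  shows "seq_lyapunov f Z (\<lambda>x z. Min {W x j | j. j \<in> {1..K} \<and> z \<in> C j}) \<and>
         seq_lyapunov f Z (\<lambda>x z. Max {W x j | j. j \<in> {1..K} \<and> z \<in> C j})"
proof -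
  have lg: "labeled_graph S E" and bij: "bij_betw s {1..K} S" and ZE: "walk_labels E = Z"
    and Cj: "\<And>j. j\<in>{1..K} \<Longrightarrow> C j = walk_labels_from E (s j)"
    using assms(2) unfolding graph_induced_covering_def by auto
  have ES: "\<And>u v i. (u,v,i) \<in> E \<Longrightarrow> u \<in> S \<and> v \<in> S" using lg unfolding labeled_graph_def by auto
  have surj: "\<And>u. u \<in> S \<Longrightarrow> \<exists>j\<in>{1..K}. s j = u"
    using bij unfolding bij_betw_def by (metis imageE)
  have L1: "\<exists>j\<in>{1..K}. z \<in> C j" if zZ: "z \<in> Z" for z
  proof -
    obtain sq :: "int \<Rightarrow> 'v" where sq: "\<forall>k. (sq k, sq (k+1), z k) \<in> E"
      using zZ ZE unfolding walk_labels_def by blast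
    then have "sq 0 \<in> S" using ES by blast
    then obtain j where j: "j\<in>{1..K}" "s j = sq 0" using surj by blast
    then have "z \<in> C j" using Cj[OF j(1)] sq unfolding walk_labels_from_def by auto
    then show ?thesis using j by blast
  qed
  have L2: "\<exists>l\<in>{1..K}. shift z \<in> C l \<and> (s j, s l, z 0) \<in> E" if hj: "j\<in>{1..K}" "z \<in> C j" for z j
  proof -
    obtain sq :: "int \<Rightarrow> 'v" where sq: "sq 0 = s j" "\<forall>k. (sq k, sq (k+1), z k) \<in> E"
      using hj Cj unfolding walk_labels_from_def by auto
    then have "sq 1 \<in> S" using ES sq(2)[rule_format, of 0] by simp
    then obtain l where l: "l\<in>{1..K}" "s l = sq 1" using surj by blast
    have "shift z \<in> C l" unfolding Cj[OF l(1)] walk_labels_from_def shift_def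
      apply (rule CollectI, rule exI[of _ "\<lambda>k. sq (k+1)"])
      using sq l proof (intro conjI allI)
        fix k :: int show "(sq (k+1), sq (k+1+1), z (k+1)) \<in> E" using sq(2) by blast
      qed simp
    moreover have "(s j, s l, z 0) \<in> E" using sq(2)[rule_format, of 0] sq(1) l by simp
    ultimately show ?thesis using l by blast
  qed
  have L3: "\<exists>j\<in>{1..K}. z \<in> C j \<and> (s j, s l, z 0) \<in> E" if hl: "l\<in>{1..K}" "shift z \<in> C l" for z l
  proof -
    obtain sq :: "int \<Rightarrow> 'v" where sq: "sq 0 = s l" "\<forall>k. (sq k, sq (k+1), shift z k) \<in> E"
      using hl Cj unfolding walk_labels_from_def by auto
    have e: "(sq (-1), s l, z 0) \<in> E" using sq(2)[rule_format, of "-1"] sq(1) by (simp add: shift_def)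
    then have "sq (-1) \<in> S" using ES by blast
    then obtain j where j: "j\<in>{1..K}" "s j = sq (-1)" using surj by blast
    have "z \<in> C j" unfolding Cj[OF j(1)] walk_labels_from_def
      apply (rule CollectI, rule exI[of _ "\<lambda>k. sq (k - 1)"])
      using sq j proof (intro conjI allI)
        fix k :: int
        have "(sq (k-1), sq (k-1+1), shift z (k-1)) \<in> E" using sq(2) by blast
        then show "(sq (k-1), sq (k+1-1), z k) \<in> E" by (simp add: shift_def)
      qed simp
    then show ?thesis using j e by auto
  qed
  obtain \<alpha>1 \<alpha>2 \<gamma> where a: "class_K_inf \<alpha>1" "class_K_inf \<alpha>2" "0 \<le> \<gamma>" "\<gamma> < 1"
    and bnd0: "\<forall>x. \<forall>j\<in>{1..K}. \<alpha>1 (norm x) \<le> W x j \<and> W x j \<le> \<alpha>2 (norm x)"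
    and dec0: "\<forall>x. \<forall>j\<in>{1..K}. \<forall>l\<in>{1..K}. \<forall>i. (s j, s l, i) \<in> E \<longrightarrow>
          (\<forall>z\<in>C j. z 0 = i \<longrightarrow> shift z \<in> C l \<longrightarrow> W (f x z) l \<le> \<gamma> * W x j)"
    using assms(3) unfolding G_lyapunov_def by (elim exE conjE) simp
  have bnd: "\<And>x j. j\<in>{1..K} \<Longrightarrow> \<alpha>1 (norm x) \<le> W x j \<and> W x j \<le> \<alpha>2 (norm x)"
    using bnd0 by blast
  have dec: "\<And>x j l z. j\<in>{1..K} \<Longrightarrow> l\<in>{1..K} \<Longrightarrow> (s j, s l, z 0) \<in> E \<Longrightarrow> z \<in> C j \<Longrightarrow>
       shift z \<in> C l \<Longrightarrow> W (f x z) l \<le> \<gamma> * W x j"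
    using dec0 by blast
  define J where "J z = {j\<in>{1..K}. z \<in> C j}" for z
  have fin: "finite (J z)" for z unfolding J_def by auto
  have ne: "z \<in> Z \<Longrightarrow> J z \<noteq> {}" for z using L1[of z] unfolding J_def by blast
  have P1: "seq_lyapunov f Z (\<lambda>x z. Min ((\<lambda>j. W x j) ` J z))"
    unfolding seq_lyapunov_def
  proof (intro exI conjI allI ballI)
    fix x and z assume z: "z \<in> Z"
    have "Min ((\<lambda>j. W x j) ` J z) \<in> (\<lambda>j. W x j) ` J z" by (rule Min_in) (use fin ne[OF z] in auto)
    then obtain j where j: "j \<in> J z" "W x j = Min ((\<lambda>j. W x j) ` J z)" by (metis imageE)
    show "\<alpha>1 (norm x) \<le> Min ((\<lambda>j. W x j) ` J z)" using j(2)[symmetric] bnd[of j x] j(1) unfolding J_def by simp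
    show "Min ((\<lambda>j. W x j) ` J z) \<le> \<alpha>2 (norm x)" using j(2)[symmetric] bnd[of j x] j(1) unfolding J_def by simp
    from j obtain l where l: "l\<in>{1..K}" "shift z \<in> C l" "(s j, s l, z 0) \<in> E"
      using L2 unfolding J_def by blast
    have "Min ((\<lambda>j. W (f x z) j) ` J (shift z)) \<le> W (f x z) l"
      using l fin unfolding J_def by (intro Min_le) auto
    also have "\<dots> \<le> \<gamma> * W x j" using dec[of j l z x] l j(1) unfolding J_def by simp
    finally show "Min ((\<lambda>j. W (f x z) j) ` J (shift z)) \<le> \<gamma> * Min ((\<lambda>j. W x j) ` J z)"
      using j by simp
  qed (use a in auto)
  have P2: "seq_lyapunov f Z (\<lambda>x z. Max ((\<lambda>j. W x j) ` J z))"
    unfolding seq_lyapunov_def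
  proof (intro exI conjI allI ballI)
    fix x and z assume z: "z \<in> Z"
    have "Max ((\<lambda>j. W x j) ` J z) \<in> (\<lambda>j. W x j) ` J z" by (rule Max_in) (use fin ne[OF z] in auto)
    then obtain j where j: "j \<in> J z" "W x j = Max ((\<lambda>j. W x j) ` J z)" by (metis imageE)
    show "\<alpha>1 (norm x) \<le> Max ((\<lambda>j. W x j) ` J z)" using j(2)[symmetric] bnd[of j x] j(1) unfolding J_def by simp
    show "Max ((\<lambda>j. W x j) ` J z) \<le> \<alpha>2 (norm x)" using j(2)[symmetric] bnd[of j x] j(1) unfolding J_def by simp
    from j obtain l0 where "l0\<in>{1..K}" "shift z \<in> C l0"
      using L2 unfolding J_def by blast
    then have ne2: "J (shift z) \<noteq> {}" unfolding J_def by auto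
    have "Max ((\<lambda>j. W (f x z) j) ` J (shift z)) \<in> (\<lambda>j. W (f x z) j) ` J (shift z)" by (rule Max_in) (use fin ne2 in auto)
    then obtain l where l: "l \<in> J (shift z)" "W (f x z) l = Max ((\<lambda>j. W (f x z) j) ` J (shift z))" by (metis imageE)
    from l obtain j' where j': "j'\<in>{1..K}" "z \<in> C j'" "(s j', s l, z 0) \<in> E"
      using L3 unfolding J_def by blast
    have "Max ((\<lambda>j. W (f x z) j) ` J (shift z)) = W (f x z) l" using l by simp
    also have "\<dots> \<le> \<gamma> * W x j'" using dec[of j' l z x] j' l(1) unfolding J_def by simp
    also have "\<dots> \<le> \<gamma> * Max ((\<lambda>j. W x j) ` J z)"
      using j' fin a(3) unfolding J_def by (intro mult_left_mono Max_ge) auto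
    finally show "Max ((\<lambda>j. W (f x z) j) ` J (shift z)) \<le> \<gamma> * Max ((\<lambda>j. W x j) ` J z)" .
  qed (use a in auto)
  show ?thesis using P1 P2 unfolding setrw J_def by simp
qed

end
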